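(* Let $F$ be an algebraically closed field of characteristic $0$ and let $\hat{\mathbb{Z}}$ be the profinite completion of $\mathbb{Z}$. Suppose $$0\to\hat{\mathbb{Z}}\overset{i_H}{\to} H\overset{\mathrm{ex}_H}{\to}F^{\times}\to1\quad\text{and}\quad 0\to\hat{\mathbb{Z}}\overset{i_G}{\to} G\overset{\mathrm{ex}_G}{\to}F^{\times}\to1$$ are exact sequences of abelian groups, where $H$ and $G$ are divisible torsion-free abelian groups. Then there is a group isomorphism $\sigma:H\to G$ such that $\mathrm{ex}_H=\mathrm{ex}_G\circ\sigma$. *)

theory Defs
  imports "HOL-Algebra.Algebra" "HOL-Computational_Algebra.Polynomial"
begin

text \<open>The profinite completion of the integers, realised as the inverse limit of the
  groups Z/nZ (n > 0): compatible families (a_n), a_n in {0..n-1},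
  with a_m mod n = a_n whenever n divides m. The index 0 is unused (value fixed to 0).\<close>
definition Zhat :: "(nat \<Rightarrow> int) monoid" where
  "Zhat = \<lparr> carrier = {a. a 0 = 0 \<and> (\<forall>n>0. 0 \<le> a n \<and> a n < int n) \<and>
                          (\<forall>m n. 0 < m \<and> 0 < n \<and> n dvd m \<longrightarrow> a m mod int n = a n)},
            Group.monoid.mult = (\<lambda>a b n. if n = 0 then 0 else (a n + b n) mod int n),
            Group.monoid.one = (\<lambda>n. 0) \<rparr>"

definition mult_group_of :: "'f::field monoid" where
  "mult_group_of = \<lparr> carrier = UNIV - {0}, Group.monoid.mult = (*), Group.monoid.one = 1 \<rparr>"

definition divisible_group :: "('a, 'b) monoid_scheme \<Rightarrow> bool" where
  "divisible_group H \<longleftrightarrow>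
     (\<forall>x\<in>carrier H. \<forall>n::nat. n > 0 \<longrightarrow> (\<exists>y\<in>carrier H. y [^]\<^bsub>H\<^esub> n = x))"

definition torsion_free_group :: "('a, 'b) monoid_scheme \<Rightarrow> bool" where
  "torsion_free_group H \<longleftrightarrow>
     (\<forall>x\<in>carrier H. \<forall>n::nat. n > 0 \<longrightarrow> x [^]\<^bsub>H\<^esub> n = \<one>\<^bsub>H\<^esub> \<longrightarrow> x = \<one>\<^bsub>H\<^esub>)"

definition short_exact :: "('a, 'x) monoid_scheme \<Rightarrow> ('b, 'y) monoid_scheme \<Rightarrow> ('c, 'z) monoid_scheme
     \<Rightarrow> ('a \<Rightarrow> 'b) \<Rightarrow> ('b \<Rightarrow> 'c) \<Rightarrow> bool" where
  "short_exact A B C i p \<longleftrightarrow>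
     i \<in> hom A B \<and> inj_on i (carrier A) \<and>
     p \<in> hom B C \<and> p ` carrier B = carrier C \<and>
     i ` carrier A = {b \<in> carrier B. p b = \<one>\<^bsub>C\<^esub>}"

end

theory Submission
  imports Defs
begin


lemma roots_unity_bound:
  assumes "n > 0"
  shows "finite {y::'f::field. y ^ n = 1} \<and> card {y::'f. y ^ n = 1} \<le> n"
proof -
  define p :: "'f poly" where "p = monom 1 n - 1"
  have pe: "poly p x = x ^ n - 1" for x by (simp add: p_def poly_monom)
  have dp: "degree p \<le> n" unfolding p_def
    by (intro degree_diff_le) (auto simp: degree_monom_le)
  have p0: "p \<noteq> 0" using pe[of 0] assms by (auto simp: power_0_left)
  have S: "{y::'f. y ^ n = 1} = {x. poly p x = 0}" by (auto simp: pe)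
  show ?thesis unfolding S using poly_roots_finite[OF p0] card_poly_roots_bound[OF p0] dp by auto
qed

lemma Zhat_mem: "a \<in> carrier Zhat \<longleftrightarrow> a 0 = 0 \<and> (\<forall>n>0. 0 \<le> a n \<and> a n < int n) \<and>
      (\<forall>m n. 0 < m \<and> 0 < n \<and> n dvd m \<longrightarrow> a m mod int n = a n)"
  by (simp add: Zhat_def)

lemma Zhat_mult: "a \<otimes>\<^bsub>Zhat\<^esub> b = (\<lambda>n. if n = 0 then 0 else (a n + b n) mod int n)"
  by (simp add: Zhat_def)

lemma Zhat_one: "\<one>\<^bsub>Zhat\<^esub> = (\<lambda>n. 0)"
  by (simp add: Zhat_def)

lemma Zhat_one_mult: "\<one>\<^bsub>Zhat\<^esub> \<otimes>\<^bsub>Zhat\<^esub> \<one>\<^bsub>Zhat\<^esub> = \<one>\<^bsub>Zhat\<^esub>"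
  by (auto simp: Zhat_def intro!: ext)

lemma Zhat_one_closed: "\<one>\<^bsub>Zhat\<^esub> \<in> carrier Zhat"
  by (simp add: Zhat_def)

lemma Zhat_mult_closed:
  assumes a: "a \<in> carrier Zhat" and b: "b \<in> carrier Zhat"
  shows "a \<otimes>\<^bsub>Zhat\<^esub> b \<in> carrier Zhat"
  unfolding Zhat_mem Zhat_mult
proof (intro conjI allI impI)
  fix m n :: nat assume h: "0 < m \<and> 0 < n \<and> n dvd m"
  then have d: "int n dvd int m" by simp
  have "((a m + b m) mod int m) mod int n = (a m + b m) mod int n"
    using d by (simp add: mod_mod_cancel)
  also have "\<dots> = (a m mod int n + b m mod int n) mod int n" by (simp add: mod_add_eq)
  also have "\<dots> = (a n + b n) mod int n" using a b h by (simp add: Zhat_mem)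
  finally show "(if m = 0 then 0 else (a m + b m) mod int m) mod int n = (if n = 0 then 0 else (a n + b n) mod int n)"
    using h by simp
qed auto

lemma Zhat_pow:
  assumes c: "c \<in> carrier Zhat"
  shows "c [^]\<^bsub>Zhat\<^esub> (k::nat) \<in> carrier Zhat \<and>
         c [^]\<^bsub>Zhat\<^esub> k = (\<lambda>n. if n = 0 then 0 else (int k * c n) mod int n)"
proof (induction k)
  case 0 then show ?case using Zhat_one_closed by (auto simp: Zhat_one)
next
  case (Suc k)
  have "c [^]\<^bsub>Zhat\<^esub> Suc k = (c [^]\<^bsub>Zhat\<^esub> k) \<otimes>\<^bsub>Zhat\<^esub> c" by simp
  then have cl: "c [^]\<^bsub>Zhat\<^esub> Suc k \<in> carrier Zhat" using Suc Zhat_mult_closed c by metis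
  have "c [^]\<^bsub>Zhat\<^esub> Suc k = (\<lambda>n. if n = 0 then 0 else ((int k * c n) mod int n + c n) mod int n)"
    using Suc by (auto simp add: Zhat_mult intro!: ext)
  also have "\<dots> = (\<lambda>n. if n = 0 then 0 else (int (Suc k) * c n) mod int n)"
    by (rule ext) (simp add: mod_add_right_eq distrib_right add.commute)
  finally show ?case using cl by simp
qed

definition emb :: "int \<Rightarrow> nat \<Rightarrow> int" where
  "emb r = (\<lambda>k. if k = 0 then 0 else r mod int k)"

lemma emb_closed: "emb r \<in> carrier Zhat"
  unfolding Zhat_mem emb_def by (auto simp: mod_mod_cancel)

lemma Zhat_eq_one:
  assumes "a \<in> carrier Zhat" "\<forall>n>0. a n = 0"
  shows "a = \<one>\<^bsub>Zhat\<^esub>"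
  unfolding Zhat_one by (rule ext) (use assms in \<open>metis Zhat_mem gr0I\<close>)

lemma mg_pow: "x [^]\<^bsub>(mult_group_of::'f::field monoid)\<^esub> (n::nat) = x ^ n"
  by (induction n) (auto simp: mult_group_of_def)



locale cov = comm_group H for H :: "('h, 'c) monoid_scheme" (structure) +
  fixes i :: "(nat \<Rightarrow> int) \<Rightarrow> 'h" and ex :: "'h \<Rightarrow> 'f::field"
  assumes dv: "divisible_group H" and tf: "torsion_free_group H"
    and se: "short_exact Zhat H (mult_group_of :: 'f monoid) i ex"
begin

lemma ex_nz: "x \<in> carrier H \<Longrightarrow> ex x \<noteq> 0"
  using se unfolding short_exact_def hom_def mult_group_of_def by auto

lemma ex_mult: "x \<in> carrier H \<Longrightarrow> y \<in> carrier H \<Longrightarrow> ex (x \<otimes> y) = ex x * ex y"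
  using se unfolding short_exact_def hom_def mult_group_of_def by auto

lemma ex_surj: "y \<noteq> 0 \<Longrightarrow> \<exists>x\<in>carrier H. ex x = y"
  using se unfolding short_exact_def mult_group_of_def by (metis (no_types, lifting) Diff_iff UNIV_I empty_iff image_iff insert_iff partial_object.select_convs(1))

lemma ker: "i ` carrier Zhat = {b \<in> carrier H. ex b = 1}"
  using se unfolding short_exact_def mult_group_of_def by simp

lemma i_inj: "inj_on i (carrier Zhat)"
  using se unfolding short_exact_def by simp

lemma i_mult: "a \<in> carrier Zhat \<Longrightarrow> b \<in> carrier Zhat \<Longrightarrow> i (a \<otimes>\<^bsub>Zhat\<^esub> b) = i a \<otimes> i b"
  using se unfolding short_exact_def hom_def by auto

lemma i_closed: "a \<in> carrier Zhat \<Longrightarrow> i a \<in> carrier H"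
  using ker by auto

lemma ex_i: "a \<in> carrier Zhat \<Longrightarrow> ex (i a) = 1"
  using ker by auto

lemma i_one: "i \<one>\<^bsub>Zhat\<^esub> = \<one>"
proof -
  have "i \<one>\<^bsub>Zhat\<^esub> = i \<one>\<^bsub>Zhat\<^esub> \<otimes> i \<one>\<^bsub>Zhat\<^esub>"
    using i_mult[OF Zhat_one_closed Zhat_one_closed] Zhat_one_mult by simp
  then show ?thesis using i_closed[OF Zhat_one_closed]
    by (metis l_one one_closed right_cancel)
qed

lemma i_pow: "a \<in> carrier Zhat \<Longrightarrow> i (a [^]\<^bsub>Zhat\<^esub> (k::nat)) = i a [^] k"
proof (induction k)
  case 0 then show ?case by (simp add: i_one)
next
  case (Suc k)
  have "a [^]\<^bsub>Zhat\<^esub> k \<in> carrier Zhat" using Zhat_pow[OF Suc.prems] by blast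
  then show ?case using i_mult[of "a [^]\<^bsub>Zhat\<^esub> k" a] Suc by simp
qed

lemma ex_one: "ex \<one> = 1"
  using ex_mult[of \<one> \<one>] ex_nz[of \<one>] by simp

lemma ex_pow: "x \<in> carrier H \<Longrightarrow> ex (x [^] (k::nat)) = ex x ^ k"
  by (induction k) (auto simp: ex_one ex_mult)

lemma ex_div1: "a \<in> carrier H \<Longrightarrow> b \<in> carrier H \<Longrightarrow> ex a = ex b \<Longrightarrow> ex (a \<otimes> inv b) = 1"
proof -
  assume a: "a \<in> carrier H" and b: "b \<in> carrier H" and e: "ex a = ex b"
  have "ex (a \<otimes> inv b) * ex b = ex a"
    using ex_mult[of "a \<otimes> inv b" b] a b by (simp add: m_assoc)
  then show ?thesis using e ex_nz[OF b] by simp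
qed

lemma root_unique:
  assumes "(n::nat) > 0" "y \<in> carrier H" "z \<in> carrier H" "y [^] n = z [^] n"
  shows "y = z"
proof -
  have "(y \<otimes> inv z) [^] n = y [^] n \<otimes> inv z [^] n"
    using assms(2,3) by (intro nat_pow_distrib) auto
  also have "\<dots> = \<one>" using assms by (simp add: nat_pow_inv)
  finally have "y \<otimes> inv z = \<one>" using tf assms unfolding torsion_free_group_def by auto
  then show ?thesis using assms by (metis inv_equality inv_inv inv_closed l_inv_ex r_inv)
qed

definition rt :: "nat \<Rightarrow> 'h \<Rightarrow> 'h" where
  "rt n h = (THE y. y \<in> carrier H \<and> y [^] n = h)"

lemma rt_eq: "(n::nat) > 0 \<Longrightarrow> y \<in> carrier H \<Longrightarrow> y [^] n = h \<Longrightarrow> rt n h = y"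
  unfolding rt_def by (rule the_equality) (auto intro: root_unique)

lemma rt_props: "n > 0 \<Longrightarrow> h \<in> carrier H \<Longrightarrow> rt n h \<in> carrier H \<and> rt n h [^] n = h"
proof -
  assume "n > 0" "h \<in> carrier H"
  then obtain y where "y \<in> carrier H" "y [^] n = h" using dv unfolding divisible_group_def by blast
  then show ?thesis using rt_eq \<open>n > 0\<close> by simp
qed

lemma rt_closed: "n > 0 \<Longrightarrow> h \<in> carrier H \<Longrightarrow> rt n h \<in> carrier H"
  using rt_props by simp

lemma rt_pow: "n > 0 \<Longrightarrow> h \<in> carrier H \<Longrightarrow> rt n h [^] n = h"
  using rt_props by simp

lemma rt_1: "h \<in> carrier H \<Longrightarrow> rt 1 h = h"
  by (rule rt_eq) auto

lemma rt_mult: "n > 0 \<Longrightarrow> a \<in> carrier H \<Longrightarrow> b \<in> carrier H \<Longrightarrow> rt n (a \<otimes> b) = rt n a \<otimes> rt n b"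
  by (rule rt_eq) (auto simp: nat_pow_distrib rt_closed rt_pow)

lemma rt_div: "n > 0 \<Longrightarrow> a \<in> carrier H \<Longrightarrow> b \<in> carrier H \<Longrightarrow> rt n (a \<otimes> inv b) = rt n a \<otimes> inv (rt n b)"
  by (rule rt_eq) (auto simp: nat_pow_distrib rt_closed rt_pow nat_pow_inv)

lemma rt_rt: "n > 0 \<Longrightarrow> m > 0 \<Longrightarrow> h \<in> carrier H \<Longrightarrow> rt (n * m) h [^] m = rt n h"
proof -
  assume a: "n > 0" "m > 0" "h \<in> carrier H"
  have "(rt (n * m) h [^] m) [^] n = h"
    using a by (simp add: nat_pow_pow rt_closed rt_pow mult.commute)
  then show ?thesis using a by (intro rt_eq[symmetric]) (auto simp: rt_closed)
qed

definition E :: "nat \<Rightarrow> 'h \<Rightarrow> 'f" where "E n h = ex (rt n h)"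

lemma E_pow: "n > 0 \<Longrightarrow> h \<in> carrier H \<Longrightarrow> E n h ^ n = ex h"
  unfolding E_def by (metis ex_pow rt_closed rt_pow)

lemma E_compat: "n > 0 \<Longrightarrow> m > 0 \<Longrightarrow> h \<in> carrier H \<Longrightarrow> E (n * m) h ^ m = E n h"
  unfolding E_def by (metis ex_pow rt_closed rt_rt mult_pos_pos)

lemma E_mult: "n > 0 \<Longrightarrow> a \<in> carrier H \<Longrightarrow> b \<in> carrier H \<Longrightarrow> E n (a \<otimes> b) = E n a * E n b"
  unfolding E_def by (simp add: rt_mult ex_mult rt_closed)

lemma E_1: "h \<in> carrier H \<Longrightarrow> E 1 h = ex h"
  unfolding E_def using rt_1 by metis

lemma E_nz: "n > 0 \<Longrightarrow> h \<in> carrier H \<Longrightarrow> E n h \<noteq> 0"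
  unfolding E_def by (simp add: ex_nz rt_closed)

lemma E_uniq:
  assumes h1: "h1 \<in> carrier H" and h2: "h2 \<in> carrier H" and e: "\<forall>n>0. E n h1 = E n h2"
  shows "h1 = h2"
proof -
  define d where "d = h1 \<otimes> inv h2"
  have d: "d \<in> carrier H" using h1 h2 by (simp add: d_def)
  have "ex d = 1" using e[rule_format, of 1] h1 h2 unfolding d_def by (intro ex_div1) (auto simp: E_1[symmetric])
  then obtain a where a: "a \<in> carrier Zhat" "d = i a" using ker d by auto
  have "a n = 0" if n: "n > 0" for n
  proof -
    have "ex (rt n d) = 1" using e[rule_format, OF n] n h1 h2 unfolding d_def E_def
      by (simp add: rt_div ex_div1 rt_closed)
    then obtain c where c: "c \<in> carrier Zhat" "rt n d = i c" using ker rt_closed[OF n d] by auto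
    have "i a = i (c [^]\<^bsub>Zhat\<^esub> n)" using rt_pow[OF n d] c a by (simp add: i_pow)
    then have "a = c [^]\<^bsub>Zhat\<^esub> n" using i_inj a c Zhat_pow[OF c(1), of n] by (meson inj_onD)
    then show ?thesis using Zhat_pow[OF c(1), of n] n by simp
  qed
  then have "a = \<one>\<^bsub>Zhat\<^esub>" using Zhat_eq_one a by blast
  then have "d = \<one>" using a i_one by simp
  then show ?thesis unfolding d_def using h1 h2 by (metis inv_closed inv_equality inv_inv m_comm)
qed

lemma E_i_eq:
  assumes a: "a \<in> carrier Zhat" and b: "b \<in> carrier Zhat" and n: "n > 0"
    and e: "E n (i a) = E n (i b)"
  shows "a n = b n"
proof -
  define u where "u = rt n (i a)"
  define v where "v = rt n (i b)"
  have u: "u \<in> carrier H" and v: "v \<in> carrier H"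
    using a b n by (auto simp: u_def v_def rt_closed i_closed)
  have "ex (u \<otimes> inv v) = 1" using e u v unfolding E_def u_def v_def by (intro ex_div1) auto
  then obtain c where c: "c \<in> carrier Zhat" "u \<otimes> inv v = i c" using ker u v by force
  have cn: "c [^]\<^bsub>Zhat\<^esub> n \<in> carrier Zhat" using Zhat_pow[OF c(1)] by blast
  have "(u \<otimes> inv v) [^] n = u [^] n \<otimes> inv (v [^] n)"
    using u v by (simp add: nat_pow_distrib nat_pow_inv)
  also have "\<dots> = i a \<otimes> inv (i b)" using a b n by (simp add: u_def v_def rt_pow i_closed)
  finally have "i (c [^]\<^bsub>Zhat\<^esub> n) = i a \<otimes> inv (i b)" using c by (simp add: i_pow)
  then have "i (c [^]\<^bsub>Zhat\<^esub> n \<otimes>\<^bsub>Zhat\<^esub> b) = i a"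
    using i_mult[OF cn b] a b by (simp add: i_closed m_assoc)
  then have "c [^]\<^bsub>Zhat\<^esub> n \<otimes>\<^bsub>Zhat\<^esub> b = a"
    using i_inj Zhat_mult_closed[OF cn b] a by (meson inj_onD)
  then have "a n = ((int n * c n) mod int n + b n) mod int n"
    using Zhat_pow[OF c(1), of n] n by (auto simp: Zhat_mult)
  also have "\<dots> = b n mod int n" by (simp add: mod_add_left_eq[symmetric])
  also have "\<dots> = b n" using b n by (simp add: Zhat_mem)
  finally show ?thesis .
qed

lemma E_exist:
  assumes xnz: "\<forall>n>0. x n \<noteq> 0" and xc: "\<forall>n>0. \<forall>m>0. x (n * m) ^ m = x n"
  shows "\<exists>h\<in>carrier H. \<forall>n>0. E n h = x n"
proof -
  obtain h1 where h1: "h1 \<in> carrier H" "ex h1 = x 1" using ex_surj xnz by auto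
  define \<zeta> where "\<zeta> n = x n / E n h1" for n
  have zpow: "\<zeta> n ^ n = 1" if n: "n > 0" for n
  proof -
    have "x n ^ n = x 1" using xc n by (metis mult_1 zero_less_one)
    then show ?thesis unfolding \<zeta>_def using E_pow[OF n h1(1)] h1 xnz by (simp add: power_divide)
  qed
  have zc: "\<zeta> (n * m) ^ m = \<zeta> n" if n: "n > 0" and m: "m > 0" for n m
    unfolding \<zeta>_def using E_compat[OF n m h1(1)] xc n m by (simp add: power_divide)
  define f where "f n r = E n (i (emb r))" for n r
  have fin: "f n r ^ n = 1" if n: "n > 0" for n r
    unfolding f_def using E_pow[OF n i_closed[OF emb_closed]] ex_i[OF emb_closed] by simp
  have finj: "inj_on (f n) {0..<int n}" if n: "n > 0" for n
  proof
    fix r s assume r: "r \<in> {0..<int n}" and s: "s \<in> {0..<int n}" and e: "f n r = f n s"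
    have "emb r n = emb s n" using E_i_eq[OF emb_closed emb_closed n] e unfolding f_def by blast
    then show "r = s" using r s n by (simp add: emb_def)
  qed
  have fsurj: "f n ` {0..<int n} = {y. y ^ n = 1}" if n: "n > 0" for n
  proof (rule card_seteq)
    show "finite {y::'f. y ^ n = 1}" using roots_unity_bound[where 'f='f, OF n] by blast
    show "f n ` {0..<int n} \<subseteq> {y. y ^ n = 1}" using fin n by auto
    have "card (f n ` {0..<int n}) = n" using card_image[OF finj[OF n]] by simp
    then show "card {y::'f. y ^ n = 1} \<le> card (f n ` {0..<int n})" using roots_unity_bound[where 'f='f, OF n] by simp
  qed
  define r where "r n = (SOME r. r \<in> {0..<int n} \<and> f n r = \<zeta> n)" for n
  have rp: "r n \<in> {0..<int n} \<and> f n (r n) = \<zeta> n" if n: "n > 0" for n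
  proof -
    have "\<zeta> n \<in> f n ` {0..<int n}" using fsurj[OF n] zpow[OF n] by simp
    then have "\<exists>r. r \<in> {0..<int n} \<and> f n r = \<zeta> n" by force
    then show ?thesis unfolding r_def by (rule someI_ex)
  qed
  define z where "z k = (if k = 0 then 0 else r k)" for k
  have zr: "n > 0 \<Longrightarrow> z n = r n" for n by (simp add: z_def)
  have zZ: "z \<in> carrier Zhat"
    unfolding Zhat_mem
  proof (intro conjI allI impI)
    show "z 0 = 0" by (simp add: z_def)
    fix n :: nat assume n: "0 < n"
    then show "0 \<le> z n" "z n < int n" using rp[OF n] zr[OF n] by auto
  next
    fix m n :: nat assume h: "0 < m \<and> 0 < n \<and> n dvd m"
    then obtain k where k: "m = n * k" by (auto elim: dvdE)
    have n: "n > 0" and m: "m > 0" and kp: "k > 0" using h k by auto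
    have "f n (z m) = f m (z m) ^ k"
      unfolding f_def using E_compat[OF n kp i_closed[OF emb_closed]] k by simp
    also have "\<dots> = \<zeta> m ^ k" using rp[OF m] zr[OF m] by simp
    also have "\<dots> = \<zeta> n" using zc[OF n kp] k by simp
    also have "\<dots> = f n (z n)" using rp[OF n] zr[OF n] by simp
    finally have "emb (z m) n = emb (z n) n"
      using E_i_eq[OF emb_closed emb_closed n] unfolding f_def by blast
    then show "z m mod int n = z n" using n rp[OF n] zr[OF n] by (simp add: emb_def)
  qed
  have Ez: "E n (i z) = \<zeta> n" if n: "n > 0" for n
  proof -
    have "E n (i z) ^ n = 1" using E_pow[OF n i_closed[OF zZ]] ex_i[OF zZ] by simp
    then obtain s where s: "s \<in> {0..<int n}" "E n (i z) = f n s" using fsurj[OF n] by force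
    then have "z n = emb s n" using E_i_eq[OF zZ emb_closed n] unfolding f_def by blast
    then have "z n = s" using s n by (simp add: emb_def)
    then show ?thesis using s rp[OF n] zr[OF n] by simp
  qed
  show ?thesis
  proof (intro bexI allI impI)
    show "h1 \<otimes> i z \<in> carrier H" using h1 zZ by (simp add: i_closed)
    fix n :: nat assume n: "n > 0"
    have "E n (h1 \<otimes> i z) = E n h1 * \<zeta> n" using E_mult[OF n h1(1) i_closed[OF zZ]] Ez[OF n] by simp
    then show "E n (h1 \<otimes> i z) = x n" using E_nz[OF n h1(1)] unfolding \<zeta>_def by simp
  qed
qed

end

theorem proposition3p8:
  fixes H :: "('h, 'c) monoid_scheme" and G :: "('g, 'd) monoid_scheme"
    and iH :: "(nat \<Rightarrow> int) \<Rightarrow> 'h" and exH :: "'h \<Rightarrow> 'f::{alg_closed_field, field_char_0}"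
    and iG :: "(nat \<Rightarrow> int) \<Rightarrow> 'g" and exG :: "'g \<Rightarrow> 'f"
  assumes "comm_group H" and "comm_group G"
    and "divisible_group H" and "torsion_free_group H"
    and "divisible_group G" and "torsion_free_group G"
    and "short_exact Zhat H (mult_group_of :: 'f monoid) iH exH"
    and "short_exact Zhat G (mult_group_of :: 'f monoid) iG exG"
  shows "\<exists>\<sigma>. \<sigma> \<in> iso H G \<and> (\<forall>x\<in>carrier H. exH x = exG (\<sigma> x))"
proof -
  interpret HH: cov H iH exH
    using assms by (simp add: cov_def cov_axioms_def comm_group_def)
  interpret GG: cov G iG exG
    using assms by (simp add: cov_def cov_axioms_def comm_group_def)
  define \<sigma> where "\<sigma> h = (THE g. g \<in> carrier G \<and> (\<forall>n>0. GG.E n g = HH.E n h))" for h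
  have sig: "\<sigma> h \<in> carrier G \<and> (\<forall>n>0. GG.E n (\<sigma> h) = HH.E n h)" if h: "h \<in> carrier H" for h
  proof -
    have "\<exists>g\<in>carrier G. \<forall>n>0. GG.E n g = HH.E n h"
      using h by (intro GG.E_exist) (auto simp: HH.E_nz HH.E_compat)
    then have "\<exists>!g. g \<in> carrier G \<and> (\<forall>n>0. GG.E n g = HH.E n h)"
      using GG.E_uniq by metis
    then show ?thesis unfolding \<sigma>_def by (rule theI')
  qed
  have hom: "\<sigma> \<in> hom H G"
  proof (rule homI)
    fix a assume "a \<in> carrier H" then show "\<sigma> a \<in> carrier G" using sig by blast
  next
    fix a b assume a: "a \<in> carrier H" and b: "b \<in> carrier H"
    show "\<sigma> (a \<otimes>\<^bsub>H\<^esub> b) = \<sigma> a \<otimes>\<^bsub>G\<^esub> \<sigma> b"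
    proof (rule GG.E_uniq)
      show "\<sigma> (a \<otimes>\<^bsub>H\<^esub> b) \<in> carrier G" using sig a b by blast
      show "\<sigma> a \<otimes>\<^bsub>G\<^esub> \<sigma> b \<in> carrier G" using sig a b by blast
      show "\<forall>n>0. GG.E n (\<sigma> (a \<otimes>\<^bsub>H\<^esub> b)) = GG.E n (\<sigma> a \<otimes>\<^bsub>G\<^esub> \<sigma> b)"
        using sig a b by (simp add: GG.E_mult HH.E_mult)
    qed
  qed
  have inj: "inj_on \<sigma> (carrier H)"
  proof
    fix a b assume a: "a \<in> carrier H" and b: "b \<in> carrier H" and e: "\<sigma> a = \<sigma> b"
    show "a = b" using HH.E_uniq[OF a b] sig[OF a] sig[OF b] e by metis
  qed
  have surj: "\<sigma> ` carrier H = carrier G"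
  proof
    show "\<sigma> ` carrier H \<subseteq> carrier G" using sig by blast
  next
    show "carrier G \<subseteq> \<sigma> ` carrier H"
    proof
      fix g assume g: "g \<in> carrier G"
      obtain h where h: "h \<in> carrier H" "\<forall>n>0. HH.E n h = GG.E n g"
        using HH.E_exist[of "\<lambda>n. GG.E n g"] g by (auto simp: GG.E_nz GG.E_compat)
      have "\<sigma> h = g" using GG.E_uniq[OF _ g, of "\<sigma> h"] sig[OF h(1)] h(2) by metis
      then show "g \<in> \<sigma> ` carrier H" using h by blast
    qed
  qed
  show ?thesis
  proof (intro exI conjI ballI)
    show "\<sigma> \<in> iso H G" unfolding iso_def using hom inj surj by (simp add: bij_betw_def)
    fix x assume x: "x \<in> carrier H"
    show "exH x = exG (\<sigma> x)" using sig[OF x] HH.E_1[OF x] GG.E_1[of "\<sigma> x"] by (metis zero_less_one)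
  qed
qed

end
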